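(* Let $A,B\in\mathbb{R}^{m\times n}$ with $m<n$ and $\operatorname{rank}(A)=m$. Let $A_1\in\mathbb{R}^{m\times m}$ be a nonsingular submatrix of $A$ formed by some $m$ columns of $A$, and let $B_1\in\mathbb{R}^{m\times m}$ be the submatrix of $B$ formed by the same column indices. If $\|A_1^{-1}B_1\|_p<1$ for some $1\le p\le\infty$, then for any given $b\in\mathbb{R}^m$ the generalized absolute value equation $Ax-B|x|=b$ has infinitely many solutions $x\in\mathbb{R}^n$.
   Context: $|x|$ denotes the entrywise absolute value. $\|\cdot\|_p$ on matrices denotes the operator norm induced by the vector $p$-norm. *)

theory Defs
  imports "HOL-Analysis.Analysis" "HOL-Library.Extended_Real"
begin

definition vec_pnorm :: "ereal \<Rightarrow> real^'n \<Rightarrow> real" where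
  "vec_pnorm p x =
     (if p = \<infinity> then Max (range (\<lambda>i. \<bar>x $ i\<bar>))
      else (\<Sum>i\<in>UNIV. \<bar>x $ i\<bar> powr real_of_ereal p) powr (1 / real_of_ereal p))"

definition mat_pnorm :: "ereal \<Rightarrow> real^'n^'m \<Rightarrow> real" where
  "mat_pnorm p M = (SUP x\<in>{x. x \<noteq> 0}. vec_pnorm p (M *v x) / vec_pnorm p x)"

definition vabs :: "real^'n \<Rightarrow> real^'n" where
  "vabs x = (\<chi> i. \<bar>x $ i\<bar>)"

definition col_submatrix :: "real^'n^'m \<Rightarrow> ('m \<Rightarrow> 'n) \<Rightarrow> real^'m^'m" where
  "col_submatrix A sel = (\<chi> i j. A $ i $ sel j)"

end

theory Submission
  imports Defs
begin


lemma ereal_cases_p: assumes "(1::ereal) \<le> p" shows "p = \<infinity> \<or> (\<exists>r. p = ereal r \<and> 1 \<le> r)"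
  using assms by (cases p) auto

lemma powr_cvx_aux:
  fixes a b l r :: real
  assumes "0 \<le> a" "0 \<le> b" "0 \<le> l" "l \<le> 1" "1 \<le> r"
  shows "(l * a + (1 - l) * b) powr r \<le> l * a powr r + (1 - l) * b powr r"
proof -
  have mu: "m powr r \<le> m" if "0 \<le> m" "m \<le> 1" for m :: real
    by (metis that(1) that(2) assms(5) powr_one_gt_zero_iff powr_mono')
  show ?thesis
  proof (cases "a = 0")
    case True
    then have "(l * a + (1 - l) * b) powr r = (1-l) powr r * b powr r"
      using assms by (simp add: powr_mult)
    also have "\<dots> \<le> (1-l) * b powr r" using mu[of "1-l"] assms by (intro mult_right_mono) auto
    finally show ?thesis using True assms by simp
  next
    case a: False
    show ?thesis
    proof (cases "b = 0")
      case True
      then have "(l * a + (1 - l) * b) powr r = l powr r * a powr r"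
        using assms by (simp add: powr_mult)
      also have "\<dots> \<le> l * a powr r" using mu[of "l"] assms by (intro mult_right_mono) auto
      finally show ?thesis using True assms by simp
    next
      case False
      have cvx: "convex_on {0<..} (\<lambda>x. x powr r)" using powr_convex assms(5) by blast
      have "((1 - (1-l)) *\<^sub>R a + (1-l) *\<^sub>R b) powr r \<le> (1-(1-l)) * a powr r + (1-l) * b powr r"
        by (rule convex_onD[OF cvx]) (use a False assms in auto)
      then show ?thesis by simp
    qed
  qed
qed

lemma pn_inf: "vec_pnorm \<infinity> x = Max (range (\<lambda>i. \<bar>x $ i\<bar>))"
  by (simp add: vec_pnorm_def)

lemma pn_real: "vec_pnorm (ereal r) x = (\<Sum>i\<in>UNIV. \<bar>x $ i\<bar> powr r) powr (1 / r)"
  by (simp add: vec_pnorm_def)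

lemma inf_ge: "\<bar>x $ i\<bar> \<le> (MAX i. \<bar>x $ i\<bar>)" by (rule Max_ge) auto

lemma pn_comp:
  assumes "1 \<le> p" shows "\<bar>x $ i\<bar> \<le> vec_pnorm p x"
proof -
  consider "p = \<infinity>" | r where "p = ereal r" "1 \<le> r" using ereal_cases_p[OF assms] by blast
  then show ?thesis
  proof cases
    case 1
    then show ?thesis by (simp add: pn_inf)
  next
    case 2
    have "\<bar>x $ i\<bar> powr r \<le> (\<Sum>i\<in>UNIV. \<bar>x $ i\<bar> powr r)"
      by (rule member_le_sum) auto
    then have "(\<bar>x $ i\<bar> powr r) powr (1/r) \<le> (\<Sum>i\<in>UNIV. \<bar>x $ i\<bar> powr r) powr (1/r)"
      using 2 by (intro powr_mono2) auto
    then show ?thesis using 2 by (simp add: pn_real powr_powr)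
  qed
qed

lemma pn_nonneg: assumes "1 \<le> p" shows "0 \<le> vec_pnorm p x"
  using pn_comp[OF assms] abs_ge_zero order_trans by blast

lemma pn_zero_iff: assumes "1 \<le> p" shows "vec_pnorm p x = 0 \<longleftrightarrow> x = 0"
proof
  assume "vec_pnorm p x = 0" then show "x = 0"
    using pn_comp[OF assms, of x] by (simp add: vec_eq_iff)
next
  assume "x = 0"
  consider "p = \<infinity>" | r where "p = ereal r" "1 \<le> r" using ereal_cases_p[OF assms] by blast
  then show "vec_pnorm p x = 0" using \<open>x = 0\<close> by cases (auto simp: pn_inf pn_real)
qed

lemma pn_mono:
  assumes "1 \<le> p" "\<And>i. \<bar>x $ i\<bar> \<le> \<bar>y $ i\<bar>" shows "vec_pnorm p x \<le> vec_pnorm p y"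
proof -
  consider "p = \<infinity>" | r where "p = ereal r" "1 \<le> r" using ereal_cases_p[OF assms(1)] by blast
  then show ?thesis
  proof cases
    case 1
    then show ?thesis using assms(2) by (auto simp: pn_inf Max_le_iff intro: order_trans inf_ge)
  next
    case 2
    have "(\<Sum>i\<in>UNIV. \<bar>x $ i\<bar> powr r) \<le> (\<Sum>i\<in>UNIV. \<bar>y $ i\<bar> powr r)"
      using assms(2) 2 by (intro sum_mono powr_mono2) auto
    then show ?thesis using 2 by (simp add: pn_real) (intro powr_mono2, auto intro: sum_nonneg)
  qed
qed

lemma pn_scale:
  assumes "1 \<le> p" shows "vec_pnorm p (c *\<^sub>R x) = \<bar>c\<bar> * vec_pnorm p x"
proof -
  consider "p = \<infinity>" | r where "p = ereal r" "1 \<le> r" using ereal_cases_p[OF assms(1)] by blast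
  then show ?thesis
  proof cases
    case 1
    obtain j where j: "\<bar>x $ j\<bar> = Max (range (\<lambda>i. \<bar>x $ i\<bar>))"
    proof -
      have "(MAX i. \<bar>x $ i\<bar>) \<in> range (\<lambda>i. \<bar>x $ i\<bar>)" by (rule Max_in) auto
      then show ?thesis using that by (metis imageE)
    qed
    have "Max (range (\<lambda>i. \<bar>c * x $ i\<bar>)) \<le> \<bar>c\<bar> * \<bar>x $ j\<bar>"
      using j by (auto simp: Max_le_iff abs_mult intro!: mult_left_mono)
    moreover have "\<bar>c\<bar> * \<bar>x $ j\<bar> \<le> Max (range (\<lambda>i. \<bar>c * x $ i\<bar>))"
      by (simp add: abs_mult[symmetric])
    ultimately have "Max (range (\<lambda>i. \<bar>c * x $ i\<bar>)) = \<bar>c\<bar> * \<bar>x $ j\<bar>" by (rule antisym)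
    then show ?thesis using 1 j by (simp add: pn_inf)
  next
    case 2
    have "(\<Sum>i\<in>UNIV. \<bar>c * x $ i\<bar> powr r) = \<bar>c\<bar> powr r * (\<Sum>i\<in>UNIV. \<bar>x $ i\<bar> powr r)"
      by (simp add: abs_mult powr_mult sum_distrib_left)
    then show ?thesis using 2
      by (simp add: pn_real powr_mult powr_powr sum_nonneg)
  qed
qed

lemma pn_0: "1 \<le> p \<Longrightarrow> vec_pnorm p 0 = 0" using pn_zero_iff by blast

lemma pn_triangle:
  assumes "1 \<le> p" shows "vec_pnorm p (x + y) \<le> vec_pnorm p x + vec_pnorm p y"
proof -
  consider "p = \<infinity>" | r where "p = ereal r" "1 \<le> r" using ereal_cases_p[OF assms(1)] by blast
  then show ?thesis
  proof cases
    case 1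
    have "\<bar>x $ i + y $ i\<bar> \<le> (MAX i. \<bar>x $ i\<bar>) + (MAX i. \<bar>y $ i\<bar>)" for i
      using abs_triangle_ineq[of "x $ i" "y $ i"] inf_ge[of x i] inf_ge[of y i] by linarith
    then show ?thesis using 1 by (simp add: pn_inf Max_le_iff)
  next
    case 2
    define g where "g z = (\<Sum>i\<in>UNIV. \<bar>z $ i\<bar> powr r)" for z :: "real^'a"
    have pg: "vec_pnorm p z = g z powr (1/r)" for z using 2 by (simp add: pn_real g_def)
    have g0: "0 \<le> g z" for z unfolding g_def by (auto intro: sum_nonneg)
    have g1: "g z = 1" if "vec_pnorm p z = 1" for z
    proof -
      have "g z = (g z powr (1/r)) powr r" using g0[of z] 2 by (simp add: powr_powr)
      also have "\<dots> = 1" using that pg by simp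
      finally show ?thesis .
    qed
    define a where "a = vec_pnorm p x"
    define b where "b = vec_pnorm p y"
    have a0: "0 \<le> a" "0 \<le> b" unfolding a_def b_def using pn_nonneg[OF assms] by auto
    show ?thesis
    proof (cases "a = 0 \<or> b = 0")
      case True
      then have "x = 0 \<or> y = 0" unfolding a_def b_def pn_zero_iff[OF assms] .
      then show ?thesis by (auto simp: pn_0[OF assms])
    next
      case False
      then have ab: "0 < a" "0 < b" using a0 by auto
      define u where "u = (1/a) *\<^sub>R x"
      define v where "v = (1/b) *\<^sub>R y"
      have "vec_pnorm p u = 1" 
        unfolding u_def using ab pn_scale[OF assms, of "1/a" x] unfolding a_def by simp
      have "vec_pnorm p v = 1" 
        unfolding v_def using ab pn_scale[OF assms, of "1/b" y] unfolding b_def by simp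
      note uv = this \<open>vec_pnorm p u = 1\<close>
      have gu: "g u = 1" "g v = 1" using g1 uv by auto
      define l where "l = a / (a + b)"
      have l01: "0 \<le> l" "l \<le> 1" unfolding l_def using ab by auto
      have "1 - l = b / (a+b)" unfolding l_def using ab by (simp add: field_simps)
      then have w: "l *\<^sub>R u + (1 - l) *\<^sub>R v = (1/(a+b)) *\<^sub>R (x + y)"
        unfolding l_def u_def v_def using ab by (simp add: vec_eq_iff field_simps)
      have "g (l *\<^sub>R u + (1 - l) *\<^sub>R v) \<le> (\<Sum>i\<in>UNIV. l * \<bar>u $ i\<bar> powr r + (1-l) * \<bar>v $ i\<bar> powr r)"
        unfolding g_def
      proof (rule sum_mono)
        fix i
        have "\<bar>(l *\<^sub>R u + (1 - l) *\<^sub>R v) $ i\<bar> powr r \<le> (l * \<bar>u $ i\<bar> + (1 - l) * \<bar>v $ i\<bar>) powr r"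
          using l01 2 by (intro powr_mono2) (auto intro: order_trans[OF abs_triangle_ineq] simp: abs_mult)
        also have "\<dots> \<le> l * \<bar>u $ i\<bar> powr r + (1-l) * \<bar>v $ i\<bar> powr r"
          using l01 2 by (intro powr_cvx_aux) auto
        finally show "\<bar>(l *\<^sub>R u + (1 - l) *\<^sub>R v) $ i\<bar> powr r \<le> l * \<bar>u $ i\<bar> powr r + (1-l) * \<bar>v $ i\<bar> powr r" .
      qed
      also have "\<dots> = l * g u + (1 - l) * g v" unfolding g_def by (simp add: sum.distrib sum_distrib_left)
      also have "\<dots> = 1" using gu by simp
      finally have "g ((1/(a+b)) *\<^sub>R (x + y)) \<le> 1" using w by simp
      then have "vec_pnorm p ((1/(a+b)) *\<^sub>R (x + y)) \<le> 1"
        unfolding pg using 2 g0 powr_mono2[of "1/r" "g ((1/(a+b)) *\<^sub>R (x + y))" 1] by simp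
      then have "(1/(a+b)) * vec_pnorm p (x + y) \<le> 1" using pn_scale[OF assms, of "1/(a+b)" "x+y"] ab by simp
      then show ?thesis using ab unfolding a_def[symmetric] b_def[symmetric] by (simp add: field_simps)
    qed
  qed
qed



lemma pn_le_norm:
  assumes "1 \<le> p" shows "vec_pnorm p (z::real^'n) \<le> real CARD('n) * norm z"
proof -
  have n1: "1 \<le> real CARD('n)" by (simp add: Suc_le_eq)
  consider "p = \<infinity>" | r where "p = ereal r" "1 \<le> r" using ereal_cases_p[OF assms(1)] by blast
  then show ?thesis
  proof cases
    case 1
    have "vec_pnorm p z \<le> norm z" using 1 by (simp add: pn_inf Max_le_iff component_le_norm_cart)
    also have "\<dots> \<le> real CARD('n) * norm z" using n1 by (simp add: mult_le_cancel_right1)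
    finally show ?thesis .
  next
    case 2
    have "(\<Sum>i\<in>UNIV. \<bar>z $ i\<bar> powr r) \<le> (\<Sum>i\<in>(UNIV::'n set). norm z powr r)"
      using 2 by (intro sum_mono powr_mono2) (auto simp: component_le_norm_cart)
    also have "\<dots> = real CARD('n) * norm z powr r" by simp
    finally have "vec_pnorm p z \<le> (real CARD('n) * norm z powr r) powr (1/r)"
      using 2 by (simp add: pn_real) (intro powr_mono2, auto intro: sum_nonneg)
    also have "\<dots> = real CARD('n) powr (1/r) * norm z"
      using 2 by (simp add: powr_mult powr_powr)
    also have "\<dots> \<le> real CARD('n) * norm z"
    proof (rule mult_right_mono)
      have "real CARD('n) powr (1/r) \<le> real CARD('n) powr 1"
        using 2 n1 by (intro powr_mono) auto
      then show "real CARD('n) powr (1/r) \<le> real CARD('n)" by simp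
    qed simp
    finally show ?thesis .
  qed
qed

lemma pn_neg: assumes "1 \<le> p" shows "vec_pnorm p (- z) = vec_pnorm p z"
  using pn_scale[OF assms, of "-1" z] by simp

lemma pn_lipschitz:
  assumes "1 \<le> p" shows "\<bar>vec_pnorm p (x::real^'n) - vec_pnorm p y\<bar> \<le> real CARD('n) * norm (x - y)"
proof -
  have "vec_pnorm p x \<le> vec_pnorm p (x - y) + vec_pnorm p y"
    using pn_triangle[OF assms, of "x - y" y] by simp
  moreover have "vec_pnorm p y \<le> vec_pnorm p (y - x) + vec_pnorm p x"
    using pn_triangle[OF assms, of "y - x" x] by simp
  moreover have "vec_pnorm p (y - x) = vec_pnorm p (x - y)"
    using pn_neg[OF assms, of "x - y"] by simp
  ultimately have "\<bar>vec_pnorm p x - vec_pnorm p y\<bar> \<le> vec_pnorm p (x - y)" by linarith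
  also have "\<dots> \<le> real CARD('n) * norm (x - y)" by (rule pn_le_norm[OF assms])
  finally show ?thesis .
qed

lemma pn_cont: assumes "1 \<le> p" shows "continuous_on S (vec_pnorm p :: real^'n \<Rightarrow> real)"
proof -
  have "lipschitz_on (real CARD('n)) S (vec_pnorm p)"
    by (rule lipschitz_onI) (use pn_lipschitz[OF assms] in \<open>auto simp: dist_norm\<close>)
  then show ?thesis by (rule lipschitz_on_continuous_on)
qed

lemma norm_le_pn: assumes "1 \<le> p" shows "norm (z::real^'n) \<le> real CARD('n) * vec_pnorm p z"
proof -
  have "norm z \<le> (\<Sum>i\<in>UNIV. \<bar>z $ i\<bar>)" by (rule norm_le_l1_cart)
  also have "\<dots> \<le> (\<Sum>i\<in>(UNIV::'n set). vec_pnorm p z)" by (intro sum_mono pn_comp[OF assms])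
  finally show ?thesis by simp
qed

lemma pn_mat_bound:
  assumes "1 \<le> p"
  shows "vec_pnorm p ((M::real^'n^'m) *v z) \<le> real CARD('m) * (\<Sum>i\<in>UNIV. \<Sum>j\<in>UNIV. \<bar>M $ i $ j\<bar>) * vec_pnorm p z"
proof -
  have "vec_pnorm p (M *v z) \<le> real CARD('m) * norm (M *v z)" by (rule pn_le_norm[OF assms])
  also have "norm (M *v z) \<le> (\<Sum>i\<in>UNIV. \<Sum>j\<in>UNIV. \<bar>M $ i $ j\<bar>) * vec_pnorm p z"
  proof -
    have "norm (M *v z) \<le> (\<Sum>i\<in>UNIV. \<bar>(M *v z) $ i\<bar>)" by (rule norm_le_l1_cart)
    also have "\<dots> \<le> (\<Sum>i\<in>UNIV. \<Sum>j\<in>UNIV. \<bar>M $ i $ j\<bar> * vec_pnorm p z)"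
    proof (rule sum_mono)
      fix i
      have "\<bar>(M *v z) $ i\<bar> = \<bar>\<Sum>j\<in>UNIV. M $ i $ j * z $ j\<bar>" by (simp add: matrix_vector_mult_def)
      also have "\<dots> \<le> (\<Sum>j\<in>UNIV. \<bar>M $ i $ j * z $ j\<bar>)" by (rule sum_abs)
      also have "\<dots> \<le> (\<Sum>j\<in>UNIV. \<bar>M $ i $ j\<bar> * vec_pnorm p z)"
        by (intro sum_mono) (simp add: abs_mult mult_left_mono pn_comp[OF assms])
      finally show "\<bar>(M *v z) $ i\<bar> \<le> (\<Sum>j\<in>UNIV. \<bar>M $ i $ j\<bar> * vec_pnorm p z)" .
    qed
    also have "\<dots> = (\<Sum>i\<in>UNIV. \<Sum>j\<in>UNIV. \<bar>M $ i $ j\<bar>) * vec_pnorm p z"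
      by (simp add: sum_distrib_right)
    finally show ?thesis .
  qed
  then have "real CARD('m) * norm (M *v z) \<le> real CARD('m) * ((\<Sum>i\<in>UNIV. \<Sum>j\<in>UNIV. \<bar>M $ i $ j\<bar>) * vec_pnorm p z)"
    by (intro mult_left_mono) auto
  finally show ?thesis by (simp add: mult.assoc)
qed

lemma mat_pnorm_le:
  assumes "1 \<le> p"
  shows "vec_pnorm p ((M::real^'n^'m) *v z) \<le> mat_pnorm p M * vec_pnorm p z"
proof (cases "z = 0")
  case True
  then show ?thesis by (simp add: pn_0[OF assms])
next
  case False
  define K where "K = real CARD('m) * (\<Sum>i\<in>UNIV. \<Sum>j\<in>UNIV. \<bar>M $ i $ j\<bar>)"
  have pz: "0 < vec_pnorm p z" using False pn_zero_iff[OF assms, of z] pn_nonneg[OF assms, of z] by (simp add: order_le_less)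
  have bdd: "bdd_above ((\<lambda>x. vec_pnorm p (M *v x) / vec_pnorm p x) ` {x. x \<noteq> 0})"
  proof (rule bdd_aboveI2)
    fix x :: "real^'n" assume "x \<in> {x. x \<noteq> 0}"
    then have "0 < vec_pnorm p x" using pn_zero_iff[OF assms, of x] pn_nonneg[OF assms, of x] by (simp add: order_le_less)
    then show "vec_pnorm p (M *v x) / vec_pnorm p x \<le> K"
      using pn_mat_bound[OF assms, of M x] unfolding K_def by (simp add: divide_le_eq)
  qed
  have "vec_pnorm p (M *v z) / vec_pnorm p z \<le> mat_pnorm p M"
    unfolding mat_pnorm_def by (rule cSUP_upper[OF _ bdd]) (use False in auto)
  then show ?thesis using pz by (simp add: divide_le_eq mult.commute)
qed



lemma pn_vabs: assumes "1 \<le> p" shows "vec_pnorm p (vabs y) = vec_pnorm p y"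
  by (rule antisym) (auto intro!: pn_mono[OF assms] simp: vabs_def)

lemma fixpoint_exists:
  fixes C :: "real^'m^'m" and d :: "real^'m"
  assumes p: "1 \<le> p" and q: "0 \<le> q" "q < 1"
    and C: "\<And>z. vec_pnorm p (C *v z) \<le> q * vec_pnorm p z"
  shows "\<exists>y. d + C *v vabs y = y"
proof -
  define R where "R = vec_pnorm p d / (1 - q)"
  have R0: "0 \<le> R" unfolding R_def using q pn_nonneg[OF p, of d] by simp
  have Req: "vec_pnorm p d + q * R = R" unfolding R_def using q by (simp add: field_simps)
  define K where "K = {y :: real^'m. vec_pnorm p y \<le> R}"
  have "bounded K"
    unfolding bounded_iff K_def
    by (rule exI[of _ "real CARD('m) * R"]) (auto intro: order_trans[OF norm_le_pn[OF p]])
  moreover have "closed K"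
    unfolding K_def by (rule closed_Collect_le) (auto intro: pn_cont[OF p])
  ultimately have "compact K" by (simp add: compact_eq_bounded_closed)
  moreover have "convex K"
    unfolding convex_def K_def
  proof (intro ballI allI impI, simp)
    fix x y :: "real^'m" and u v :: real
    assume h: "vec_pnorm p x \<le> R" "vec_pnorm p y \<le> R" "0 \<le> u" "0 \<le> v" "u + v = 1"
    have "vec_pnorm p (u *\<^sub>R x + v *\<^sub>R y) \<le> u * vec_pnorm p x + v * vec_pnorm p y"
      using pn_triangle[OF p, of "u *\<^sub>R x" "v *\<^sub>R y"] h by (simp add: pn_scale[OF p])
    also have "\<dots> \<le> u * R + v * R" using h by (intro add_mono mult_left_mono) auto
    finally show "vec_pnorm p (u *\<^sub>R x + v *\<^sub>R y) \<le> R" using h by (simp add: distrib_right[symmetric])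
  qed
  moreover have "(0::real^'m) \<in> K" unfolding K_def using R0 by (simp add: pn_0[OF p])
  then have "K \<noteq> {}" by blast
  moreover have "continuous_on K (\<lambda>y. d + C *v vabs y)"
    unfolding vabs_def
    by (intro continuous_intros bounded_linear.continuous_on[OF matrix_vector_mul_bounded_linear])
  moreover have "(\<lambda>y. d + C *v vabs y) \<in> K \<rightarrow> K"
  proof
    fix y assume "y \<in> K"
    then have y: "vec_pnorm p y \<le> R" by (simp add: K_def)
    have "vec_pnorm p (d + C *v vabs y) \<le> vec_pnorm p d + vec_pnorm p (C *v vabs y)" by (rule pn_triangle[OF p])
    also have "\<dots> \<le> vec_pnorm p d + q * vec_pnorm p y" using C[of "vabs y"] by (simp add: pn_vabs[OF p])
    also have "\<dots> \<le> vec_pnorm p d + q * R" using y q by (simp add: mult_left_mono)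
    finally show "d + C *v vabs y \<in> K" using Req by (simp add: K_def)
  qed
  ultimately obtain y where "y \<in> K" "d + C *v vabs y = y" by (rule brouwer)
  then show ?thesis by blast
qed

lemma inv_right: "invertible (A::real^'n^'n) \<Longrightarrow> A ** matrix_inv A = mat 1"
  unfolding invertible_def matrix_inv_def by (rule someI_ex[THEN conjunct1])

lemma col_mult:
  fixes M :: "real^'n^'m" and sel :: "'m \<Rightarrow> 'n"
  assumes "inj sel" "N \<notin> range sel"
  shows "M *v (\<chi> k. if k \<in> range sel then w $ inv sel k else if k = N then s else 0)
       = col_submatrix M sel *v w + s *\<^sub>R (\<chi> i. M $ i $ N)"
  unfolding vec_eq_iff
proof (rule allI)
  fix i
  define g where "g k = M $ i $ k * (if k \<in> range sel then w $ inv sel k else if k = N then s else 0)" for k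
  have "(\<Sum>k\<in>UNIV. g k) = (\<Sum>k\<in>UNIV - range sel. g k) + (\<Sum>k\<in>range sel. g k)"
    by (rule sum.subset_diff) auto
  also have "(\<Sum>k\<in>UNIV - range sel. g k) = (\<Sum>k\<in>UNIV - range sel. if k = N then M $ i $ N * s else 0)"
    by (rule sum.cong) (auto simp: g_def)
  also have "\<dots> = M $ i $ N * s" using assms(2) by (simp add: sum.delta)
  also have "(\<Sum>k\<in>range sel. g k) = (\<Sum>j\<in>UNIV. g (sel j))"
    using assms(1) by (simp add: sum.reindex)
  also have "\<dots> = (\<Sum>j\<in>UNIV. M $ i $ sel j * w $ j)"
    using assms(1) by (simp add: g_def)
  finally have "(\<Sum>k\<in>UNIV. g k) = M $ i $ N * s + (\<Sum>j\<in>UNIV. M $ i $ sel j * w $ j)" by simp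
  then show "(M *v (\<chi> k. if k \<in> range sel then w $ inv sel k else if k = N then s else 0)) $ i
       = (col_submatrix M sel *v w + s *\<^sub>R (\<chi> i. M $ i $ N)) $ i"
    by (simp add: matrix_vector_mult_def col_submatrix_def g_def mult.commute)
qed



theorem theorem3p2:
  fixes A B :: "real^'n^'m" and sel :: "'m \<Rightarrow> 'n" and p :: ereal and b :: "real^'m"
  assumes "CARD('m) < CARD('n)"
    and "rank A = CARD('m)"
    and "inj sel"
    and "invertible (col_submatrix A sel)"
    and "1 \<le> p"
    and "mat_pnorm p (matrix_inv (col_submatrix A sel) ** col_submatrix B sel) < 1"
  shows "infinite {x :: real^'n. A *v x - B *v vabs x = b}"
proof -
  note p = assms(5)
  define A1 where "A1 = col_submatrix A sel"
  define B1 where "B1 = col_submatrix B sel"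
  define C where "C = matrix_inv A1 ** B1"
  define q where "q = max (mat_pnorm p C) 0"
  have q: "0 \<le> q" "q < 1" using assms(6) unfolding q_def C_def A1_def B1_def by auto
  have Cq: "vec_pnorm p (C *v z) \<le> q * vec_pnorm p z" for z
  proof -
    have "vec_pnorm p (C *v z) \<le> mat_pnorm p C * vec_pnorm p z" by (rule mat_pnorm_le[OF p])
    also have "\<dots> \<le> q * vec_pnorm p z" unfolding q_def
      by (intro mult_right_mono pn_nonneg[OF p]) simp
    finally show ?thesis .
  qed
  have AI: "A1 ** matrix_inv A1 = mat 1" using assms(4) inv_right unfolding A1_def by blast
  have "range sel \<noteq> UNIV"
  proof
    assume "range sel = UNIV"
    then have "card (range sel) = CARD('n)" by simp
    moreover have "card (range sel) = CARD('m)" using assms(3) by (simp add: card_image)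
    ultimately show False using assms(1) by simp
  qed
  then obtain N where N: "N \<notin> range sel" by blast
  define aN where "aN = (\<chi> i. A $ i $ N)"
  define bN where "bN = (\<chi> i. B $ i $ N)"
  define S where "S = {x :: real^'n. A *v x - B *v vabs x = b}"
  have ex: "\<exists>x\<in>S. x $ N = t" for t
  proof -
    define d where "d = matrix_inv A1 *v (b - t *\<^sub>R aN + \<bar>t\<bar> *\<^sub>R bN)"
    obtain y where y: "d + C *v vabs y = y" using fixpoint_exists[OF p q Cq] by blast
    define x where "x = (\<chi> k. if k \<in> range sel then y $ inv sel k else if k = N then t else 0)"
    have vx: "vabs x = (\<chi> k. if k \<in> range sel then vabs y $ inv sel k else if k = N then \<bar>t\<bar> else 0)"
      unfolding x_def vabs_def by (simp add: vec_eq_iff)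
    have Ax: "A *v x = A1 *v y + t *\<^sub>R aN"
      unfolding x_def A1_def aN_def by (rule col_mult[OF assms(3) N])
    have Bx: "B *v vabs x = B1 *v vabs y + \<bar>t\<bar> *\<^sub>R bN"
      unfolding vx B1_def bN_def by (rule col_mult[OF assms(3) N])
    have "A1 *v y = A1 *v d + A1 *v (C *v vabs y)"
      by (subst y[symmetric]) (simp add: matrix_vector_right_distrib)
    also have "A1 *v d = b - t *\<^sub>R aN + \<bar>t\<bar> *\<^sub>R bN"
      unfolding d_def by (simp add: matrix_vector_mul_assoc AI)
    also have "A1 *v (C *v vabs y) = B1 *v vabs y"
      unfolding C_def by (simp add: matrix_vector_mul_assoc matrix_mul_assoc AI)
    finally have "A1 *v y = b - t *\<^sub>R aN + \<bar>t\<bar> *\<^sub>R bN + B1 *v vabs y" .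
    then have "x \<in> S" unfolding S_def using Ax Bx by (simp add: algebra_simps)
    moreover have "x $ N = t" using N unfolding x_def by simp
    ultimately show ?thesis by blast
  qed
  show ?thesis
  proof
    assume "finite {x :: real^'n. A *v x - B *v vabs x = b}"
    then have "finite ((\<lambda>x. x $ N) ` S)" unfolding S_def by simp
    moreover have "(\<lambda>x. x $ N) ` S = UNIV"
    proof -
      have "t \<in> (\<lambda>x. x $ N) ` S" for t
      proof -
        obtain x where "x \<in> S" "x $ N = t" using ex[of t] by blast
        then show "t \<in> (\<lambda>x. x $ N) ` S" by force
      qed
      then show ?thesis by blast
    qed
    ultimately show False using infinite_UNIV_char_0[where 'a=real] by simp
  qed
qed

end
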